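(* Let $M=M(S^2;\frac{q_1}{p_1},\frac{q_2}{p_2},\frac{q_3}{p_3})$ with $e(M)\neq0$. Then $$|X^{irr}(M)|=p_1^+p_2^+p_3^++p_1^-p_2^-p_3^--x_M,$$ where $p_i^+=\lceil p_i/2\rceil-1$, $p_i^-=\lfloor p_i/2\rfloor$, and $x_M$ is the number of exceptional abelian characters of $M$.
   Context: $M(S^2;\frac{q_1}{p_1},\frac{q_2}{p_2},\frac{q_3}{p_3})$ ($(p_i,q_i)$ coprime, $p_i\ge1$) is the closed Seifert manifold obtained from $S_{0,3}\times S^1$ by gluing solid tori whose meridians are $p_ic_i+q_ih_i$; $e(M)=\sum_iq_i/p_i$; $\pi_1(M)=\langle c_1,c_2,c_3,h\mid [c_i,h]=1=c_i^{p_i}h^{q_i},\ c_1c_2c_3=1\rangle$. $X^{irr}(M)$ is the set of characters of irreducible representations $\pi_1(M)\to\mathrm{SL}_2(\mathbb{C})$. An abelian character is the trace of a diagonal representation; it is exceptional if it is the trace of a representation $\rho$ with $\rho(h)=\pm I$ and $\rho(c_i)\neq\pm I$ for $i=1,2,3$. *)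

theory Defs
  imports "HOL-Analysis.Analysis"
begin

type_synonym mat2 = "complex^2^2"

text \<open>Generators of pi_1(M) = < c1,c2,c3,h | [c_i,h]=1 = c_i^{p_i} h^{q_i}, c1 c2 c3 = 1 >.\<close>
datatype gen = C1 | C2 | C3 | H

fun cgen :: "nat \<Rightarrow> gen" where
  "cgen i = (if i = 1 then C1 else if i = 2 then C2 else C3)"

fun mpow_nat :: "mat2 \<Rightarrow> nat \<Rightarrow> mat2" where
  "mpow_nat A 0 = mat 1"
| "mpow_nat A (Suc n) = A ** mpow_nat A n"

definition mpow_int :: "mat2 \<Rightarrow> int \<Rightarrow> mat2" where
  "mpow_int A k = (if k \<ge> 0 then mpow_nat A (nat k) else mpow_nat (matrix_inv A) (nat (- k)))"

text \<open>A representation pi_1(M) -> SL_2(C), given by the images of the generators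
  satisfying the defining relations. Parameters p q are indexed by i in {1,2,3}.\<close>
definition is_rep :: "(nat \<Rightarrow> int) \<Rightarrow> (nat \<Rightarrow> int) \<Rightarrow> (gen \<Rightarrow> mat2) \<Rightarrow> bool" where
  "is_rep p q \<rho> \<longleftrightarrow>
     (\<forall>g. det (\<rho> g) = 1) \<and>
     (\<forall>i\<in>{1,2,3::nat}. \<rho> (cgen i) ** \<rho> H = \<rho> H ** \<rho> (cgen i)) \<and>
     (\<forall>i\<in>{1,2,3::nat}. mpow_int (\<rho> (cgen i)) (p i) ** mpow_int (\<rho> H) (q i) = mat 1) \<and>
     \<rho> C1 ** \<rho> C2 ** \<rho> C3 = mat 1"

text \<open>Words in the generators and their inverses (True = generator, False = inverse);
  they represent all elements of pi_1(M).\<close>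
type_synonym word = "(gen \<times> bool) list"

fun eval_word :: "(gen \<Rightarrow> mat2) \<Rightarrow> word \<Rightarrow> mat2" where
  "eval_word \<rho> [] = mat 1"
| "eval_word \<rho> ((g, b) # w) = (if b then \<rho> g else matrix_inv (\<rho> g)) ** eval_word \<rho> w"

definition character :: "(gen \<Rightarrow> mat2) \<Rightarrow> word \<Rightarrow> complex" where
  "character \<rho> = (\<lambda>w. trace (eval_word \<rho> w))"

text \<open>Irreducible: no common invariant line in C^2 (the image group is generated by the
  rho g, which are invertible).\<close>
definition irreducible_rep :: "(gen \<Rightarrow> mat2) \<Rightarrow> bool" where
  "irreducible_rep \<rho> \<longleftrightarrow>
     \<not> (\<exists>v::complex^2. v \<noteq> 0 \<and> (\<forall>g. \<exists>c. \<rho> g *v v = c *s v))"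

definition Xirr :: "(nat \<Rightarrow> int) \<Rightarrow> (nat \<Rightarrow> int) \<Rightarrow> (word \<Rightarrow> complex) set" where
  "Xirr p q = {character \<rho> | \<rho>. is_rep p q \<rho> \<and> irreducible_rep \<rho>}"

definition diagonal_mat :: "mat2 \<Rightarrow> bool" where
  "diagonal_mat A \<longleftrightarrow> A $ 1 $ 2 = 0 \<and> A $ 2 $ 1 = 0"

definition abelian_chars :: "(nat \<Rightarrow> int) \<Rightarrow> (nat \<Rightarrow> int) \<Rightarrow> (word \<Rightarrow> complex) set" where
  "abelian_chars p q = {character \<rho> | \<rho>. is_rep p q \<rho> \<and> (\<forall>g. diagonal_mat (\<rho> g))}"

definition exceptional_abelian_chars :: "(nat \<Rightarrow> int) \<Rightarrow> (nat \<Rightarrow> int) \<Rightarrow> (word \<Rightarrow> complex) set" where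
  "exceptional_abelian_chars p q =
     {ch \<in> abelian_chars p q. \<exists>\<rho>. is_rep p q \<rho> \<and> character \<rho> = ch \<and>
        (\<rho> H = mat 1 \<or> \<rho> H = - mat 1) \<and>
        (\<forall>i\<in>{1,2,3::nat}. \<rho> (cgen i) \<noteq> mat 1 \<and> \<rho> (cgen i) \<noteq> - mat 1)}"

end

theory Submission
  imports Defs
begin

lemmas m2 = vec_eq_iff forall_2 matrix_matrix_mult_def sum_2 mat_def matrix_vector_mult_def det_2 trace_def

definition M2 :: "complex \<Rightarrow> complex \<Rightarrow> complex \<Rightarrow> complex \<Rightarrow> mat2" where
  "M2 a b c d = (\<chi> i j. if i = 1 then (if j = 1 then a else b) else (if j = 1 then c else d))"

lemma M2_simps[simp]: "M2 a b c d $ 1 $ 1 = a" "M2 a b c d $ 1 $ 2 = b" "M2 a b c d $ 2 $ 1 = c" "M2 a b c d $ 2 $ 2 = d"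
  by (simp_all add: M2_def)

lemma CH: "det (A::mat2) = 1 \<Longrightarrow> A ** A = mat (trace A) ** A - mat 1"
  by (simp add: m2 algebra_simps)

definition adj :: "mat2 \<Rightarrow> mat2" where "adj A = mat (trace A) - A"

lemma adj_inv: assumes "det (A::mat2) = 1" shows "A ** adj A = mat 1" "adj A ** A = mat 1"
  using assms by (simp_all add: m2 adj_def algebra_simps)

lemma inv_unique: assumes "(A::mat2) ** B = mat 1" "B ** A = mat 1" shows "matrix_inv A = B"
proof -
  have ex: "\<exists>X. A ** X = mat 1 \<and> X ** A = mat 1" using assms by blast
  define X where "X = matrix_inv A"
  have X: "A ** X = mat 1 \<and> X ** A = mat 1" unfolding X_def matrix_inv_def by (rule someI_ex[OF ex])
  have "X = X ** (A ** B)" using assms by (simp add: matrix_mul_rid)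
  also have "\<dots> = (X ** A) ** B" by (simp add: matrix_mul_assoc)
  also have "\<dots> = B" using X by (simp add: matrix_mul_lid)
  finally show ?thesis unfolding X_def .
qed

lemma inv_det1: "det (A::mat2) = 1 \<Longrightarrow> matrix_inv A = adj A"
  using adj_inv inv_unique by blast

lemma BA: "(B::mat2) ** A = mat (trace B) ** A + mat (trace A) ** B + mat (trace (A ** B) - trace A * trace B) - A ** B"
  by (simp add: m2 algebra_simps)

lemma mat_mult_scal: "mat a ** mat b = (mat (a*b)::mat2)" by (simp add: m2)
lemma minus_mat1: "- mat 1 = (mat (-1)::mat2)" by (simp add: m2)

lemma LA: "det (A::mat2) = 1 \<Longrightarrow> A ** (mat a + mat b ** A + mat c ** B + mat d ** (A ** B)) =
   mat(-b) + mat(a + b*trace A) ** A + mat (-d) ** B + mat (c + d * trace A) ** (A ** B)"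
  by (simp add: m2 algebra_simps; algebra)
lemma LB: "det (B::mat2) = 1 \<Longrightarrow> B ** (mat a + mat b ** A + mat c ** B + mat d ** (A ** B)) =
   mat(b * (trace (A**B) - trace A * trace B) - c - d * trace A) + mat(b * trace B + d) ** A
   + mat (a + b * trace A + c * trace B + d * trace (A ** B)) ** B + mat (-b) ** (A ** B)"
  by (simp add: m2 algebra_simps; algebra)

definition Rel :: "mat2 \<Rightarrow> mat2 \<Rightarrow> mat2 \<Rightarrow> mat2 \<Rightarrow> mat2 \<Rightarrow> mat2 \<Rightarrow> bool" where
 "Rel A B A' B' X X' \<longleftrightarrow> (\<exists>a b c d. X = mat a + mat b ** A + mat c ** B + mat d ** (A ** B) \<and>
     X' = mat a + mat b ** A' + mat c ** B' + mat d ** (A' ** B'))"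

lemma scal_comb: "mat s ** (mat a + mat b ** A + mat c ** B + mat d ** (A ** B)) =
   mat (s*a) + mat (s*b) ** A + mat (s*c) ** B + mat (s*d) ** ((A::mat2) ** B)"
  by (simp add: m2 algebra_simps)
lemma diff_comb: "(mat a + mat b ** A + mat c ** B + mat d ** (A ** B)) - (mat a' + mat b' ** A + mat c' ** B + mat d' ** (A ** B)) =
   mat (a-a') + mat (b-b') ** A + mat (c-c') ** B + mat (d-d') ** ((A::mat2) ** B)"
  by (simp add: m2 algebra_simps)
lemma tr_comb: "trace (mat a + mat b ** A + mat c ** B + mat d ** ((A::mat2) ** B)) = 2*a + b * trace A + c * trace B + d * trace (A ** B)"
  by (simp add: m2 algebra_simps)
lemma adj_mult: "adj A ** X = mat (trace A) ** X - (A::mat2) ** X"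
  by (simp add: m2 adj_def algebra_simps)

context
  fixes A B A' B' :: mat2
  assumes dA: "det A = 1" and dB: "det B = 1" and dA': "det A' = 1" and dB': "det B' = 1"
    and tA: "trace A = trace A'" and tB: "trace B = trace B'" and tAB: "trace (A ** B) = trace (A' ** B')"
begin

lemma R_one: "Rel A B A' B' (mat 1) (mat 1)"
  unfolding Rel_def by (rule exI[of _ 1], rule exI[of _ 0], rule exI[of _ 0], rule exI[of _ 0]) (simp add: m2)

lemma R_A: "Rel A B A' B' X X' \<Longrightarrow> Rel A B A' B' (A ** X) (A' ** X')"
  unfolding Rel_def using LA[OF dA] LA[OF dA'] tA by metis

lemma R_B: "Rel A B A' B' X X' \<Longrightarrow> Rel A B A' B' (B ** X) (B' ** X')"
  unfolding Rel_def using LB[OF dB] LB[OF dB'] tA tB tAB by metis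

lemma R_scal: "Rel A B A' B' X X' \<Longrightarrow> Rel A B A' B' (mat s ** X) (mat s ** X')"
  unfolding Rel_def using scal_comb by metis

lemma R_diff: "Rel A B A' B' X X' \<Longrightarrow> Rel A B A' B' Y Y' \<Longrightarrow> Rel A B A' B' (X - Y) (X' - Y')"
  unfolding Rel_def using diff_comb by metis

lemma R_adjA: "Rel A B A' B' X X' \<Longrightarrow> Rel A B A' B' (adj A ** X) (adj A' ** X')"
  unfolding adj_mult using R_diff R_scal R_A tA by metis

lemma R_adjB: "Rel A B A' B' X X' \<Longrightarrow> Rel A B A' B' (adj B ** X) (adj B' ** X')"
  unfolding adj_mult using R_diff R_scal R_B tB by metis

lemma R_tr: "Rel A B A' B' X X' \<Longrightarrow> trace X = trace X'"
  unfolding Rel_def using tr_comb tA tB tAB by metis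

end

lemma C3_eq: assumes "det (A::mat2) = 1" "det B = 1" "A ** B ** C = mat 1"
  shows "C = adj B ** adj A" "matrix_inv C = A ** B"
proof -
  have "adj B ** adj A ** (A ** B) = mat 1"
    by (metis adj_inv assms(1,2) matrix_mul_assoc matrix_mul_lid)
  hence "C = adj B ** adj A ** (A ** B ** C)" by (metis matrix_mul_assoc matrix_mul_lid)
  thus c: "C = adj B ** adj A" using assms(3) by (simp add: matrix_mul_rid)
  have "C ** (A ** B) = mat 1" using c \<open>adj B ** adj A ** (A ** B) = mat 1\<close> by simp
  thus "matrix_inv C = A ** B" using inv_unique assms(3) by blast
qed

lemma is_repD: assumes "is_rep p q \<rho>"
  shows "det (\<rho> g) = 1" "\<rho> C1 ** \<rho> C2 ** \<rho> C3 = mat 1"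
    "\<And>i. i \<in> {1,2,3} \<Longrightarrow> \<rho> (cgen i) ** \<rho> H = \<rho> H ** \<rho> (cgen i)"
    "\<And>i. i \<in> {1,2,3} \<Longrightarrow> mpow_int (\<rho> (cgen i)) (p i) ** mpow_int (\<rho> H) (q i) = mat 1"
  using assms unfolding is_rep_def by auto

lemma inv_mat_e: "det (mat e :: mat2) = 1 \<Longrightarrow> matrix_inv (mat e :: mat2) = mat e"
  by (simp add: inv_det1 adj_def m2)

lemma fricke:
  assumes r: "is_rep p q \<rho>" and r': "is_rep p q \<rho>'" and h: "\<rho> H = mat e" "\<rho>' H = mat e"
    and t1: "trace (\<rho> C1) = trace (\<rho>' C1)" and t2: "trace (\<rho> C2) = trace (\<rho>' C2)"
    and t12: "trace (\<rho> C1 ** \<rho> C2) = trace (\<rho>' C1 ** \<rho>' C2)"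
  shows "character \<rho> = character \<rho>'"
proof -
  let ?A = "\<rho> C1" and ?B = "\<rho> C2" and ?A' = "\<rho>' C1" and ?B' = "\<rho>' C2"
  note d = is_repD(1)[OF r] is_repD(1)[OF r']
  have c3: "\<rho> C3 = adj ?B ** adj ?A" "matrix_inv (\<rho> C3) = ?A ** ?B"
    using C3_eq[OF d(1) d(1) is_repD(2)[OF r]] by auto
  have c3': "\<rho>' C3 = adj ?B' ** adj ?A'" "matrix_inv (\<rho>' C3) = ?A' ** ?B'"
    using C3_eq[OF d(2) d(2) is_repD(2)[OF r']] by auto
  have de: "det (mat e :: mat2) = 1" using d(1)[of H] h by simp
  note ctx = d(1)[of C1] d(1)[of C2] d(2)[of C1] d(2)[of C2] t1 t2 t12
  note RA = R_A[OF ctx] and RB = R_B[OF ctx] and RaA = R_adjA[OF ctx] and RaB = R_adjB[OF ctx]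
    and Rs = R_scal[OF ctx]
  have "Rel ?A ?B ?A' ?B' (eval_word \<rho> w) (eval_word \<rho>' w)" for w
  proof (induction w)
    case Nil
    then show ?case using R_one[OF ctx] by simp
  next
    case (Cons gb w)
    obtain g b where gb: "gb = (g, b)" by (cases gb)
    show ?case
    proof (cases b)
      case True
      then show ?thesis using Cons gb
        by (cases g) (simp_all add: RA RB RaA RaB Rs c3 c3' h matrix_mul_assoc[symmetric])
    next
      case False
      then show ?thesis using Cons gb
      proof (cases g)
        case C3
        then show ?thesis using Cons gb False by (simp add: RA RB c3(2) c3'(2) matrix_mul_assoc[symmetric])
      next
        case H
        then show ?thesis using Cons gb False by (simp add: Rs h inv_mat_e de)
      qed (simp_all add: RaA RaB inv_det1 d)
    qed
  qed
  thus ?thesis unfolding character_def using R_tr[OF ctx] by blast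
qed

definition kap :: "complex \<Rightarrow> complex \<Rightarrow> complex \<Rightarrow> complex" where
  "kap x y z = x^2 + y^2 + z^2 - x*y*z - 4"

lemma vec2_nz: "(v::complex^2) \<noteq> 0 \<longleftrightarrow> v$1 \<noteq> 0 \<or> v$2 \<noteq> 0"
  by (simp add: vec_eq_iff forall_2)

lemma eig_poly: assumes "det (A::mat2) = 1" "A *v v = a *s v" "v \<noteq> 0"
  shows "a^2 - trace A * a + 1 = 0"
proof -
  have e1: "A$1$1 * v$1 + A$1$2 * v$2 = a * v$1" and e2: "A$2$1 * v$1 + A$2$2 * v$2 = a * v$2"
    using assms(2) by (simp_all add: m2)
  have d: "A$1$1 * A$2$2 - A$1$2 * A$2$1 = 1" using assms(1) by (simp add: det_2)
  have "(a^2 - trace A * a + 1) * v$1 = 0" using e1 e2 d unfolding trace_def sum_2 by algebra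
  moreover have "(a^2 - trace A * a + 1) * v$2 = 0" using e1 e2 d unfolding trace_def sum_2 by algebra
  ultimately show ?thesis using assms(3) vec2_nz by auto
qed

lemma eig_tr: assumes "det (A::mat2) = 1" "A *v v = a *s v" "v \<noteq> 0"
  shows "a \<noteq> 0" "trace A = a + 1/a"
proof -
  have "a^2 - trace A * a + 1 = 0" by (rule eig_poly[OF assms])
  thus "a \<noteq> 0" by auto
  thus "trace A = a + 1/a" using \<open>a^2 - trace A * a + 1 = 0\<close>
    by (simp add: field_simps power2_eq_square)
qed

lemma mv_scal: "(A::mat2) *v (c *s v) = c *s (A *v v)"
  by (simp add: m2 algebra_simps)

lemma CE_conv: assumes "det (A::mat2) = 1" "det B = 1" "v \<noteq> 0" "A *v v = a *s v" "B *v v = b *s v"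
  shows "kap (trace A) (trace B) (trace (A ** B)) = 0"
proof -
  have ab: "(A ** B) *v v = (a*b) *s v"
    by (simp add: matrix_vector_mul_assoc[symmetric] assms(4,5) mv_scal vector_smult_assoc mult.commute)
  have dab: "det (A ** B) = 1" using assms by (simp add: det_mul)
  note ta = eig_tr[OF assms(1) assms(4) assms(3)] and tb = eig_tr[OF assms(2) assms(5) assms(3)]
    and tab = eig_tr[OF dab ab assms(3)]
  show ?thesis unfolding kap_def ta(2) tb(2) tab(2) using ta(1) tb(1)
    by (simp add: field_simps power2_eq_square)
qed

lemma root_exists: "\<exists>a::complex. a^2 - x*a + 1 = 0"
proof -
  define s where "s = csqrt (x^2 - 4)"
  have "s^2 = x^2 - 4" unfolding s_def by simp
  hence "((x + s)/2)^2 - x*((x+s)/2) + 1 = 0" by (simp add: field_simps power2_eq_square; algebra)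
  thus ?thesis by blast
qed

definition col :: "nat \<Rightarrow> mat2 \<Rightarrow> complex^2" where
  "col j P = P *v (\<chi> i. if i = of_nat j then 1 else 0)"

lemma col_mult: "A *v col j P = col j (A ** P)"
  by (simp add: col_def matrix_vector_mul_assoc)

lemma col_scal: "col j (mat a ** P) = a *s col j P"
  by (simp add: col_def m2)

lemma col_nz: "P \<noteq> 0 \<Longrightarrow> col 1 P \<noteq> 0 \<or> col 2 P \<noteq> 0"
  by (auto simp: col_def m2)

lemma col_zero: "col j (0::mat2) = 0"
  by (simp add: col_def m2)

lemma eig_col: assumes "A ** P = mat a ** P" "P \<noteq> 0"
  shows "\<exists>u. u \<noteq> 0 \<and> A *v u = a *s u \<and> (\<exists>j. u = col j P)"
  using col_nz[OF assms(2)] assms(1) col_mult col_scal by metis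

lemma root_facts: assumes "det (A::mat2) = 1" "a^2 - trace A * a + 1 = 0"
  shows "A ** (A - mat (trace A - a)) = mat a ** (A - mat (trace A - a))"
    "A ** (A - mat a) = mat (trace A - a) ** (A - mat a)"
    "(A - mat (trace A - a)) ** (A - mat a) = 0"
    "(A - mat a) ** (A - mat (trace A - a)) = 0"
  using assms by (simp_all add: m2 algebra_simps power2_eq_square; algebra)+

lemma eig_exists: assumes "det (A::mat2) = 1" shows "\<exists>v a. v \<noteq> 0 \<and> A *v v = a *s v"
proof -
  obtain a where a: "a^2 - trace A * a + 1 = 0" using root_exists by blast
  show ?thesis
  proof (cases "A - mat (trace A - a) = 0")
    case True
    hence "A = mat (trace A - a)" by simp
    hence "A *v (\<chi> i. if i = 1 then 1 else 0) = (trace A - a) *s (\<chi> i. if i = 1 then 1 else 0)"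
      by (simp add: m2)
    moreover have "(\<chi> i. if i = 1 then 1 else 0) \<noteq> (0::complex^2)" by (simp add: vec_eq_iff)
    ultimately show ?thesis by blast
  next
    case False
    then show ?thesis using eig_col[OF root_facts(1)[OF assms a]] by blast
  qed
qed

lemma kernel: assumes "(M::mat2) \<noteq> 0" "M *v u = 0" "M *v w = 0" "u \<noteq> 0"
  shows "\<exists>c. w = c *s u"
proof -
  have e: "M$1$1 * u$1 + M$1$2 * u$2 = 0" "M$2$1 * u$1 + M$2$2 * u$2 = 0"
     "M$1$1 * w$1 + M$1$2 * w$2 = 0" "M$2$1 * w$1 + M$2$2 * w$2 = 0"
    using assms(2,3) by (simp_all add: m2)
  have "M$1$1 * (u$1 * w$2 - u$2 * w$1) = 0" "M$1$2 * (u$1 * w$2 - u$2 * w$1) = 0"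
       "M$2$1 * (u$1 * w$2 - u$2 * w$1) = 0" "M$2$2 * (u$1 * w$2 - u$2 * w$1) = 0"
    using e by algebra+
  moreover have "M$1$1 \<noteq> 0 \<or> M$1$2 \<noteq> 0 \<or> M$2$1 \<noteq> 0 \<or> M$2$2 \<noteq> 0"
    using assms(1) by (auto simp: vec_eq_iff forall_2)
  ultimately have cr: "u$1 * w$2 = u$2 * w$1" by auto
  show ?thesis
  proof (cases "u$1 = 0")
    case False
    have "w = (w$1 / u$1) *s u" using False cr by (simp add: vec_eq_iff forall_2 field_simps)
    thus ?thesis by blast
  next
    case True
    hence "u$2 \<noteq> 0" using assms(4) vec2_nz by blast
    have "w = (w$2 / u$2) *s u" using True cr \<open>u$2 \<noteq> 0\<close> by (simp add: vec_eq_iff forall_2 field_simps)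
    thus ?thesis by blast
  qed
qed

lemma key_identity: assumes "det (A::mat2) = 1" "det (B::mat2) = 1" "a^2 - trace A * a + 1 = 0"
  shows "(A - mat (trace A - a)) ** B ** (A - mat a) ** B ** (A - mat (trace A - a)) =
     mat (kap (trace A) (trace B) (trace (A ** B))) ** (A - mat (trace A - a))"
  using assms unfolding kap_def by (simp add: m2 algebra_simps power2_eq_square; algebra)

lemma mat_eig: "mat s *v v = s *s (v::complex^2)" by (simp add: m2)

lemma CE: assumes dA: "det (A::mat2) = 1" and dB: "det B = 1" and k: "kap (trace A) (trace B) (trace (A ** B)) = 0"
  shows "\<exists>v. v \<noteq> 0 \<and> (\<exists>c. A *v v = c *s v) \<and> (\<exists>c. B *v v = c *s v)"
proof -
  obtain a where a: "a^2 - trace A * a + 1 = 0" using root_exists by blast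
  define P where "P = A - mat (trace A - a)"
  define Q where "Q = A - mat a"
  note rf = root_facts[OF dA a, folded P_def Q_def]
  have ki: "P ** B ** Q ** B ** P = 0"
    using key_identity[OF dA dB a, folded P_def Q_def] k by (simp add: m2)
  show ?thesis
  proof (cases "P = 0")
    case True
    hence "A = mat (trace A - a)" unfolding P_def by simp
    moreover obtain v c where "v \<noteq> 0" "B *v v = c *s v" using eig_exists[OF dB] by blast
    ultimately show ?thesis using mat_eig by metis
  next
    case Pnz: False
    show ?thesis
    proof (cases "Q = 0")
      case True
      hence "A = mat a" unfolding Q_def by simp
      moreover obtain v c where "v \<noteq> 0" "B *v v = c *s v" using eig_exists[OF dB] by blast
      ultimately show ?thesis using mat_eig by metis
    next
      case Qnz: False
      obtain u j where u: "u \<noteq> 0" "A *v u = a *s u" "u = col j P" using eig_col[OF rf(1) Pnz] by blast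
      have Qu: "Q *v u = 0" using u(3) rf(4) col_mult col_zero by metis
      define w where "w = Q *v (B *v u)"
      show ?thesis
      proof (cases "w = 0")
        case True
        have "Q *v (B *v u) = 0" using True w_def by simp
        then obtain c where "B *v u = c *s u" using kernel[OF Qnz Qu _ u(1)] by blast
        thus ?thesis using u by blast
      next
        case False
        have "A *v w = (A ** Q) *v (B *v u)" unfolding w_def by (simp add: matrix_vector_mul_assoc matrix_mul_assoc)
        also have "\<dots> = (mat (trace A - a) ** Q) *v (B *v u)" using rf(2) by simp
        also have "\<dots> = (trace A - a) *s w" unfolding w_def by (simp only: matrix_vector_mul_assoc[symmetric] mat_eig)
        finally have Aw: "A *v w = (trace A - a) *s w" .
        have Pw: "P *v w = 0" unfolding w_def matrix_vector_mul_assoc[of P Q] rf(3) by (simp add: m2)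
        have "P *v (B *v w) = (P ** B ** Q ** B ** P) *v (\<chi> i. if i = of_nat j then 1 else 0)"
          unfolding w_def u(3) col_def by (simp add: matrix_vector_mul_assoc matrix_mul_assoc)
        hence PBw: "P *v (B *v w) = 0" using ki by simp
        obtain c where "B *v w = c *s w" using kernel[OF Pnz Pw PBw False] by blast
        thus ?thesis using Aw False by blast
      qed
    qed
  qed
qed

lemma adj_eig: "A *v v = c *s v \<Longrightarrow> adj A *v v = (trace A - c) *s (v::complex^2)"
  by (simp add: m2 adj_def algebra_simps)

lemma comm_shift: assumes "(X::mat2) ** Hm = Hm ** X" shows "(Hm - mat \<mu>) ** X = X ** (Hm - mat (\<mu>::complex))"
proof -
  have "(Hm - mat \<mu>) ** X = Hm ** X - mat \<mu> ** X" by (simp add: m2 algebra_simps)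
  moreover have "X ** (Hm - mat \<mu>) = X ** Hm - X ** mat \<mu>" by (simp add: m2 algebra_simps)
  moreover have "mat \<mu> ** X = X ** mat \<mu>" by (simp add: m2 algebra_simps)
  ultimately show ?thesis using assms by simp
qed

lemma irr_H: assumes r: "is_rep p q \<rho>" and irr: "irreducible_rep \<rho>"
  shows "\<exists>e. \<rho> H = mat e \<and> (e = 1 \<or> e = -1)"
proof -
  obtain v \<mu> where v: "v \<noteq> 0" "\<rho> H *v v = \<mu> *s v" using eig_exists[OF is_repD(1)[OF r]] by blast
  define N where "N = \<rho> H - mat \<mu>"
  have Nv: "N *v v = 0" using v(2) unfolding N_def by (simp add: m2 algebra_simps)
  have comm: "N ** \<rho> g = \<rho> g ** N" for g
  proof -
    have "\<rho> g ** \<rho> H = \<rho> H ** \<rho> g"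
    proof (cases g)
      case C1 thus ?thesis using is_repD(3)[OF r, of 1] by simp
    next
      case C2 thus ?thesis using is_repD(3)[OF r, of 2] by simp
    next
      case C3 thus ?thesis using is_repD(3)[OF r, of 3] by simp
    qed simp
    thus ?thesis unfolding N_def by (rule comm_shift)
  qed
  have "N = 0"
  proof (rule ccontr)
    assume Nnz: "N \<noteq> 0"
    have "\<exists>c. \<rho> g *v v = c *s v" for g
    proof -
      have "N *v (\<rho> g *v v) = 0" by (simp add: matrix_vector_mul_assoc comm) (simp add: matrix_vector_mul_assoc[symmetric] Nv)
      thus ?thesis using kernel[OF Nnz Nv _ v(1)] by blast
    qed
    thus False using irr v(1) unfolding irreducible_rep_def by blast
  qed
  hence h: "\<rho> H = mat \<mu>" unfolding N_def by simp
  have "det (mat \<mu> :: mat2) = 1" using is_repD(1)[OF r, of H] h by simp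
  hence "\<mu> * \<mu> = 1" by (simp add: m2)
  hence "\<mu> = 1 \<or> \<mu> = -1" by (metis mult_cancel_left1 square_eq_1_iff)
  thus ?thesis using h by blast
qed

lemma irr_kap: assumes r: "is_rep p q \<rho>" and irr: "irreducible_rep \<rho>" and h: "\<rho> H = mat e"
  shows "kap (trace (\<rho> C1)) (trace (\<rho> C2)) (trace (\<rho> C1 ** \<rho> C2)) \<noteq> 0"
proof
  assume k: "kap (trace (\<rho> C1)) (trace (\<rho> C2)) (trace (\<rho> C1 ** \<rho> C2)) = 0"
  obtain v a b where v: "v \<noteq> 0" "\<rho> C1 *v v = a *s v" "\<rho> C2 *v v = b *s v"
    using CE[OF is_repD(1)[OF r] is_repD(1)[OF r] k] by blast
  have c3: "\<rho> C3 = adj (\<rho> C2) ** adj (\<rho> C1)" using C3_eq[OF is_repD(1)[OF r] is_repD(1)[OF r] is_repD(2)[OF r]] by simp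
  have "\<exists>c. \<rho> g *v v = c *s v" for g
  proof (cases g)
    case C3
    have "\<rho> C3 *v v = adj (\<rho> C2) *v (adj (\<rho> C1) *v v)" by (simp add: c3 matrix_vector_mul_assoc)
    also have "\<dots> = adj (\<rho> C2) *v ((trace (\<rho> C1) - a) *s v)" by (simp only: adj_eig[OF v(2)])
    also have "\<dots> = (trace (\<rho> C1) - a) *s (adj (\<rho> C2) *v v)" by (rule mv_scal)
    also have "\<dots> = (trace (\<rho> C1) - a) *s ((trace (\<rho> C2) - b) *s v)" by (simp only: adj_eig[OF v(3)])
    also have "\<dots> = ((trace (\<rho> C1) - a) * (trace (\<rho> C2) - b)) *s v" by (simp only: vector_smult_assoc)
    finally have "\<rho> C3 *v v = ((trace (\<rho> C1) - a) * (trace (\<rho> C2) - b)) *s v" .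
    thus ?thesis using C3 by blast
  next
    case H
    have "\<rho> H *v v = e *s v" unfolding h by (simp add: m2)
    thus ?thesis using H by blast
  qed (use v in blast)+
  thus False using irr v(1) unfolding irreducible_rep_def by blast
qed

lemma mpow_nat_mat: "mpow_nat (mat e) n = mat (e^n)"
  by (induction n) (simp_all add: mat_mult_scal)

lemma pow_sq1: "(e::complex) * e = 1 \<Longrightarrow> e^n = (if even n then 1 else e)"
  by (induction n) auto

lemma mpow_int_mat: assumes "(e::complex) * e = 1"
  shows "mpow_int (mat e) k = mat (if even k then 1 else e)"
proof (cases "k \<ge> 0")
  case True
  then show ?thesis unfolding mpow_int_def using pow_sq1[OF assms] by (simp add: mpow_nat_mat even_nat_iff)
next
  case False
  have "matrix_inv (mat e :: mat2) = mat e" using inv_unique[of "mat e" "mat e"] assms by (simp add: mat_mult_scal)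
  then show ?thesis unfolding mpow_int_def using False pow_sq1[OF assms] by (simp add: mpow_nat_mat even_nat_iff)
qed

lemma mpow_nat_eig: "A *v v = l *s v \<Longrightarrow> mpow_nat A n *v v = (l^n) *s v"
proof (induction n)
  case 0 then show ?case by simp
next
  case (Suc n)
  have "mpow_nat A (Suc n) *v v = A *v (mpow_nat A n *v v)" by (simp add: matrix_vector_mul_assoc)
  also have "\<dots> = (l^n) *s (A *v v)" using Suc by (simp add: mv_scal)
  also have "\<dots> = (l^Suc n) *s v" using Suc.prems by (simp add: vector_smult_assoc mult.commute)
  finally show ?case .
qed

lemma POW: assumes dA: "det (A::mat2) = 1" and tA: "trace A = l + 1/l" and l0: "l \<noteq> 0" and l1: "l * l \<noteq> 1"
  and ln: "l^n = s" and s: "s * s = 1"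
  shows "mpow_nat A n = mat s"
proof -
  define m where "m = 1/l"
  have a: "l^2 - trace A * l + 1 = 0" using tA l0 by (simp add: field_simps power2_eq_square)
  have tm: "trace A - l = m" using tA m_def by simp
  define P where "P = A - mat m"
  define Q where "Q = A - mat l"
  note rf = root_facts[OF dA a, unfolded tm, folded P_def Q_def]
  define d where "d = l - m"
  have d0: "d \<noteq> 0" using l1 l0 unfolding d_def m_def by (auto simp: field_simps)
  have gen: "A ** (mat \<alpha> ** P - mat \<beta> ** Q) = mat \<alpha> ** (A ** P) - mat \<beta> ** (A ** Q)" for \<alpha> \<beta>
    by (simp add: m2 algebra_simps)
  have sc: "mat \<alpha> ** (mat \<gamma> ** X) = mat (\<alpha> * \<gamma>) ** (X::mat2)" for \<alpha> \<gamma> X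
    by (simp add: matrix_mul_assoc mat_mult_scal)
  have formula: "mpow_nat A k = mat (l^k / d) ** P - mat (m^k / d) ** Q" for k
  proof (induction k)
    case 0
    show ?case using d0 unfolding P_def Q_def d_def by (simp add: m2 field_simps)
  next
    case (Suc k)
    have "mpow_nat A (Suc k) = A ** (mat (l^k / d) ** P - mat (m^k / d) ** Q)" using Suc by simp
    also have "\<dots> = mat (l^Suc k / d) ** P - mat (m^Suc k / d) ** Q"
      unfolding gen rf(1) rf(2) sc by (simp add: mult.commute)
    finally show ?case .
  qed
  have mn: "m^n = s" using ln s l0 unfolding m_def by (simp add: power_one_over) (metis mult_cancel_left1 nonzero_eq_divide_eq zero_neq_one mult.commute)
  show ?thesis unfolding formula ln mn using d0 unfolding P_def Q_def d_def by (simp add: m2 field_simps)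
qed

lemma UNI: assumes "N ** N = (0::mat2)" "l * l = 1"
  shows "mpow_nat (mat l + N) n = mat (l^n) + mat (of_nat n * l^n * l) ** N"
proof (induction n)
  case 0 then show ?case by (simp add: m2)
next
  case (Suc n)
  have g: "(mat l + N) ** (mat a + mat b ** N) = mat (l*a) + mat (l*b + a) ** N + mat b ** (N ** N)" for a b
    by (simp add: m2 algebra_simps)
  have "mpow_nat (mat l + N) (Suc n) = (mat l + N) ** (mat (l^n) + mat (of_nat n * l^n * l) ** N)"
    using Suc by simp
  also have "\<dots> = mat (l*l^n) + mat (l * (of_nat n * l^n * l) + l^n) ** N + mat (of_nat n * l^n * l) ** (N ** N)"
    by (rule g)
  also have "\<dots> = mat (l^Suc n) + mat (l * (of_nat n * l^n * l) + l^n) ** N"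
    by (simp only: assms(1)) (simp add: m2)
  also have "l * (of_nat n * l^n * l) + l^n = of_nat (Suc n) * l^Suc n * l"
    using assms(2) by (simp add: algebra_simps)
  finally show ?case .
qed

lemma SPEC: assumes dA: "det (A::mat2) = 1" and n: "n \<ge> 1" and pw: "mpow_nat A n = mat s"
  and nI: "A \<noteq> mat 1" "A \<noteq> mat (-1)"
  shows "\<exists>l. l^n = s \<and> l * l \<noteq> 1 \<and> l \<noteq> 0 \<and> trace A = l + 1/l"
proof -
  obtain v l where v: "v \<noteq> 0" "A *v v = l *s v" using eig_exists[OF dA] by blast
  note et = eig_tr[OF dA v(2) v(1)]
  have "mat s *v v = (l^n) *s v" using mpow_nat_eig[OF v(2), of n] pw by simp
  hence ls: "l^n = s" using v(1) by (simp add: mat_eig)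
  have "l * l \<noteq> 1"
  proof
    assume l1: "l * l = 1"
    have ep: "l^2 - trace A * l + 1 = 0" by (rule eig_poly[OF dA v(2) v(1)])
    define N where "N = A - mat l"
    have NN: "N ** N = 0" using dA ep l1 unfolding N_def by (simp add: m2 algebra_simps power2_eq_square; algebra)
    have "mpow_nat (mat l + N) n = mat (l^n) + mat (of_nat n * l^n * l) ** N" by (rule UNI[OF NN l1])
    hence "mat (of_nat n * l^n * l) ** N = 0" using pw ls unfolding N_def by (simp add: m2)
    moreover have "of_nat n * l^n * l \<noteq> 0" using n et(1) by simp
    ultimately have "N = 0" by (simp add: m2 vec_eq_iff[symmetric])
    hence "A = mat l" unfolding N_def by simp
    moreover have "l = 1 \<or> l = -1" using l1 by (metis mult_cancel_left1 square_eq_1_iff)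
    ultimately show False using nI by auto
  qed
  thus ?thesis using ls et by blast
qed

definition Sset :: "nat \<Rightarrow> complex \<Rightarrow> complex set" where
  "Sset n s = (\<lambda>l. l + 1/l) ` {l. l^n = s \<and> l * l \<noteq> 1}"

lemma fib_eq: assumes "(l::complex) \<noteq> 0" "m \<noteq> 0"
  shows "l + 1/l = m + 1/m \<longleftrightarrow> m = l \<or> m = 1/l"
proof -
  have e: "l + 1/l - (m + 1/m) = (l - m) * (l*m - 1) / (l*m)"
    using assms by (simp add: field_simps)
  have "l + 1/l = m + 1/m \<longleftrightarrow> l + 1/l - (m + 1/m) = 0" by simp
  also have "\<dots> \<longleftrightarrow> (l - m) * (l*m - 1) = 0" unfolding e using assms by simp
  also have "\<dots> \<longleftrightarrow> l = m \<or> l*m = 1" by simp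
  also have "l*m = 1 \<longleftrightarrow> m = 1/l" using assms by (auto simp: field_simps)
  finally show ?thesis by auto
qed

lemma card_R_S: assumes n: "n \<ge> 1" and s: "s * s = 1"
  shows "finite (Sset n s)" "card {l::complex. l^n = s \<and> l * l \<noteq> 1} = 2 * card (Sset n s)"
proof -
  define R where "R = {l::complex. l^n = s \<and> l * l \<noteq> 1}"
  define f where "f = (\<lambda>l::complex. l + 1/l)"
  have s0: "s \<noteq> 0" using s by auto
  have fR: "finite R" unfolding R_def using finite_nth_roots[of n s] n by (auto intro: finite_subset)
  thus "finite (Sset n s)" unfolding Sset_def R_def by simp
  have R0: "l \<in> R \<Longrightarrow> l \<noteq> 0" for l using s0 n unfolding R_def by (auto simp: power_0_left)
  have Rinv: "l \<in> R \<Longrightarrow> 1/l \<in> R" for l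
  proof -
    assume l: "l \<in> R"
    have "(1/l)^n = 1/s" using l unfolding R_def by (simp add: power_one_over)
    also have "1/s = s" using s s0 by (simp add: field_simps)
    finally show ?thesis using l R0[OF l] unfolding R_def by (auto simp: field_simps)
  qed
  have fib: "card {l \<in> R. f l = t} = 2" if t: "t \<in> f ` R" for t
  proof -
    obtain l0 where l0: "l0 \<in> R" "t = f l0" using t by blast
    have "{l \<in> R. f l = t} = {l0, 1/l0}"
    proof (intro set_eqI iffI)
      fix x assume "x \<in> {l \<in> R. f l = t}"
      hence "x \<in> R" "x + 1/x = l0 + 1/l0" using l0 unfolding f_def by auto
      thus "x \<in> {l0, 1/l0}" using fib_eq[of l0 x] R0 l0(1) by auto
    next
      fix x assume "x \<in> {l0, 1/l0}"
      thus "x \<in> {l \<in> R. f l = t}" using l0 Rinv[OF l0(1)] unfolding f_def by auto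
    qed
    moreover have "l0 \<noteq> 1/l0" using l0 R0[OF l0(1)] unfolding R_def by (auto simp: field_simps)
    ultimately show ?thesis by simp
  qed
  have "sum (\<lambda>l. card {t \<in> f ` R. f l = t}) R = 2 * card (f ` R)"
    by (rule sum_multicount) (use fR fib in auto)
  moreover have "card {t \<in> f ` R. f l = t} = 1" if "l \<in> R" for l
  proof -
    have "{t \<in> f ` R. f l = t} = {f l}" using that by auto
    thus ?thesis by simp
  qed
  ultimately have "card R = 2 * card (f ` R)" by simp
  thus "card {l::complex. l^n = s \<and> l * l \<noteq> 1} = 2 * card (Sset n s)"
    unfolding R_def Sset_def f_def by simp
qed

lemma card_R: assumes n: "n \<ge> 1" and s: "s \<noteq> 0"
  shows "card {l::complex. l^n = s \<and> l * l \<noteq> 1} = n - card {l::complex. l^n = s \<and> l * l = 1}"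
proof -
  have fin: "finite {l::complex. l^n = s}" using finite_nth_roots n by auto
  have "{l::complex. l^n = s \<and> l * l \<noteq> 1} = {l. l^n = s} - {l::complex. l^n = s \<and> l * l = 1}" by auto
  hence "card {l::complex. l^n = s \<and> l * l \<noteq> 1} = card {l::complex. l^n = s} - card {l::complex. l^n = s \<and> l * l = 1}"
    using fin by (metis (no_types, lifting) card_Diff_subset finite_subset mem_Collect_eq subsetI)
  thus ?thesis using card_nth_roots[OF s] n by simp
qed

lemma sq1: "(l::complex) * l = 1 \<longleftrightarrow> l = 1 \<or> l = -1"
  by (metis mult_cancel_left1 square_eq_1_iff)

lemma R1_plus: assumes "n \<ge> 1" shows "card {l::complex. l^n = 1 \<and> l * l = 1} = (if even n then 2 else 1)"
proof -
  have "{l::complex. l^n = 1 \<and> l * l = 1} = (if even n then {1, -1} else {1})"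
    by (auto simp: sq1)
  thus ?thesis by simp
qed

lemma R1_minus: assumes "n \<ge> 1" shows "card {l::complex. l^n = -1 \<and> l * l = 1} = (if even n then 0 else 1)"
proof -
  have "{l::complex. l^n = -1 \<and> l * l = 1} = (if even n then {} else {-1})"
    by (auto simp: sq1)
  thus ?thesis by simp
qed

lemma card_S_plus: assumes "n \<ge> 1" shows "2 * card (Sset n 1) = n - (if even n then 2 else 1)"
  using card_R_S[of n 1] card_R[of n 1] R1_plus[of n] assms by simp

lemma card_S_minus: assumes "n \<ge> 1" shows "2 * card (Sset n (-1)) = n - (if even n then 0 else 1)"
  using card_R_S[of n "-1"] card_R[of n "-1"] R1_minus[of n] assms by simp

lemma floor_half: "\<lfloor>real_of_int p / 2\<rfloor> = p div 2"
  using floor_divide_of_int_eq[of p 2] by simp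

lemma ceil_half: "\<lceil>real_of_int p / 2\<rceil> = - ((- p) div 2)"
proof -
  have "\<lceil>real_of_int p / 2\<rceil> = - \<lfloor>real_of_int (-p) / 2\<rfloor>" by (simp add: ceiling_def)
  thus ?thesis by (simp only: floor_half)
qed

lemma auxP: assumes "2 * (c::nat) = nat p - (if even (nat p) then 2 else 1)" "1 \<le> p"
  shows "2 * int c = p - (if even p then 2 else 1)"
proof (cases "even p")
  case True
  hence "even (nat p)" "p \<ge> 2" using assms(2) by (auto simp: even_nat_iff)
  thus ?thesis using assms True by simp
next
  case False
  hence "odd (nat p)" using assms(2) by (auto simp: even_nat_iff)
  thus ?thesis using assms False by simp
qed
lemma auxM: "2 * (c::nat) = nat p - (if even (nat p) then 0 else 1) \<Longrightarrow> 1 \<le> p \<Longrightarrow> 2 * int c = p - (if even p then 0 else 1)"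
  by (simp add: even_nat_iff split: if_splits; presburger)

lemma count_plus: assumes "p \<ge> 1" shows "int (card (Sset (nat p) 1)) = \<lceil>real_of_int p / 2\<rceil> - 1"
proof -
  have "2 * card (Sset (nat p) 1) = nat p - (if even (nat p) then 2 else 1)" using card_S_plus assms by simp
  hence "2 * int (card (Sset (nat p) 1)) = p - (if even p then 2 else 1)" using assms(1)
    by (rule auxP)
  thus ?thesis unfolding ceil_half by presburger
qed

lemma count_minus: assumes "p \<ge> 1" shows "int (card (Sset (nat p) (-1))) = \<lfloor>real_of_int p / 2\<rfloor>"
proof -
  have "2 * card (Sset (nat p) (-1)) = nat p - (if even (nat p) then 0 else 1)" using card_S_minus assms by simp
  hence "2 * int (card (Sset (nat p) (-1))) = p - (if even p then 0 else 1)" using assms(1)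
    by (rule auxM)
  thus ?thesis unfolding floor_half by presburger
qed

lemma count_minus_odd: assumes "p \<ge> 1" "odd p" shows "int (card (Sset (nat p) 1)) = \<lfloor>real_of_int p / 2\<rfloor>"
  using count_plus[OF assms(1)] assms(2) unfolding ceil_half floor_half by presburger

definition sgq :: "complex \<Rightarrow> int \<Rightarrow> complex" where "sgq e k = (if even k then 1 else e)"

lemma sgq_sq: "e = 1 \<or> e = -1 \<Longrightarrow> sgq e k * sgq e k = 1" by (auto simp: sgq_def)
lemma e_sq: "e = 1 \<or> e = (-1::complex) \<Longrightarrow> e * e = 1" by auto

lemma char_simps: "character \<rho> [(g,True)] = trace (\<rho> g)" "character \<rho> [(g,True),(g',True)] = trace (\<rho> g ** \<rho> g')"
  by (simp_all add: character_def)

lemma S_mem: "x \<in> Sset n s \<longleftrightarrow> (\<exists>l. l^n = s \<and> l*l \<noteq> 1 \<and> x = l + 1/l)" unfolding Sset_def by auto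

lemma S_l0: "n \<ge> 1 \<Longrightarrow> s \<noteq> 0 \<Longrightarrow> (l::complex)^n = s \<Longrightarrow> l \<noteq> 0" by (auto simp: power_0_left)

lemma sq1_nz: "s * s = (1::complex) \<Longrightarrow> s \<noteq> 0" by auto

lemma pow_from_S: assumes "det (A::mat2) = 1" "trace A \<in> Sset n s" "n \<ge> 1" "s * s = 1"
  shows "mpow_nat A n = mat s"
proof -
  obtain l where l: "l^n = s" "l*l \<noteq> 1" "trace A = l + 1/l" using assms(2) S_mem by blast
  have "l \<noteq> 0" using S_l0[OF assms(3) sq1_nz[OF assms(4)] l(1)] .
  thus ?thesis using POW[OF assms(1) l(3) _ l(2) l(1) assms(4)] by simp
qed

lemma S_not2: assumes "x \<in> Sset n s" "n \<ge> 1" "s \<noteq> 0" shows "x \<noteq> 2" "x \<noteq> -2"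
proof -
  obtain l where l: "l^n = s" "l*l \<noteq> 1" "x = l + 1/l" using assms(1) S_mem by blast
  have l0: "l \<noteq> 0" using S_l0[OF assms(2,3) l(1)] .
  show "x \<noteq> 2"
  proof
    assume "x = 2"
    hence "l*l + 1 = 2*l" using l(3) l0 by (simp add: field_simps)
    hence "(l - 1) * (l - 1) = 0" by algebra
    hence "l = 1" by simp
    thus False using l(2) by simp
  qed
  show "x \<noteq> -2"
  proof
    assume "x = -2"
    hence "l*l + 1 = -2*l" using l(3) l0 by (simp add: field_simps)
    hence "(l + 1) * (l + 1) = 0" by algebra
    hence "l + 1 = 0" by simp
    hence "l = -1" by (simp add: eq_neg_iff_add_eq_0)
    thus False using l(2) by simp
  qed
qed

lemma mat_comm: "X ** mat e = mat e ** (X::mat2)" by (simp add: m2 algebra_simps)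
lemma tr_mat: "trace (mat e :: mat2) = 2 * e" by (simp add: m2)
lemma det_mat: "det (mat e :: mat2) = e * e" by (simp add: m2)

lemma is_rep_intro:
  assumes e: "e = 1 \<or> e = -1" and h: "\<rho> H = mat e"
    and d: "det (\<rho> C1) = 1" "det (\<rho> C2) = 1" "det (\<rho> C3) = 1"
    and pr: "\<rho> C1 ** \<rho> C2 ** \<rho> C3 = mat 1" and p: "\<forall>i\<in>{1,2,3::nat}. p i \<ge> 1"
    and t: "trace (\<rho> C1) \<in> Sset (nat (p 1)) (sgq e (q 1))" "trace (\<rho> C2) \<in> Sset (nat (p 2)) (sgq e (q 2))"
      "trace (\<rho> C3) \<in> Sset (nat (p 3)) (sgq e (q 3))"
  shows "is_rep p q \<rho>"
proof -
  have dg: "det (\<rho> g) = 1" for g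
    by (cases g) (use d h e in \<open>auto simp: det_mat\<close>)
  have ti: "trace (\<rho> (cgen i)) \<in> Sset (nat (p i)) (sgq e (q i))" if "i \<in> {1,2,3}" for i
    using that t by auto
  have pw: "mpow_int (\<rho> (cgen i)) (p i) ** mpow_int (\<rho> H) (q i) = mat 1" if i: "i \<in> {1,2,3}" for i
  proof -
    have pi: "p i \<ge> 1" using p i by auto
    have "mpow_int (\<rho> (cgen i)) (p i) = mpow_nat (\<rho> (cgen i)) (nat (p i))" using pi by (simp add: mpow_int_def)
    also have "\<dots> = mat (sgq e (q i))" using pow_from_S[OF dg ti[OF i]] pi sgq_sq[OF e] by simp
    finally have a: "mpow_int (\<rho> (cgen i)) (p i) = mat (sgq e (q i))" .
    have b: "mpow_int (\<rho> H) (q i) = mat (sgq e (q i))" unfolding h mpow_int_mat[OF e_sq[OF e]] sgq_def ..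
    show ?thesis unfolding a b mat_mult_scal sgq_sq[OF e] ..
  qed
  show ?thesis unfolding is_rep_def using dg pw pr h mat_comm by auto
qed

lemma adj_tr: "trace (adj B ** adj A) = trace ((A::mat2) ** B)" by (simp add: m2 adj_def algebra_simps)

lemma tr_C3: assumes r: "is_rep p q \<rho>" shows "trace (\<rho> C3) = trace (\<rho> C1 ** \<rho> C2)"
proof -
  have "\<rho> C3 = adj (\<rho> C2) ** adj (\<rho> C1)" using C3_eq[OF is_repD(1)[OF r] is_repD(1)[OF r] is_repD(2)[OF r]] by simp
  thus ?thesis using adj_tr by simp
qed

definition realizes :: "(nat \<Rightarrow> int) \<Rightarrow> (nat \<Rightarrow> int) \<Rightarrow> (gen \<Rightarrow> mat2) \<Rightarrow> complex \<Rightarrow> complex \<Rightarrow> complex \<Rightarrow> complex \<Rightarrow> bool" where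
  "realizes p q \<rho> e x y z \<longleftrightarrow> is_rep p q \<rho> \<and> \<rho> H = mat e \<and> trace (\<rho> C1) = x \<and> trace (\<rho> C2) = y \<and> trace (\<rho> C1 ** \<rho> C2) = z"

definition Phi :: "(nat \<Rightarrow> int) \<Rightarrow> (nat \<Rightarrow> int) \<Rightarrow> complex \<times> complex \<times> complex \<times> complex \<Rightarrow> (word \<Rightarrow> complex)" where
  "Phi p q d = (case d of (e,x,y,z) \<Rightarrow> character (SOME \<rho>. realizes p q \<rho> e x y z))"

lemma Phi_eq: assumes "realizes p q \<rho> e x y z" shows "Phi p q (e,x,y,z) = character \<rho>"
proof -
  have "realizes p q (SOME \<rho>. realizes p q \<rho> e x y z) e x y z" using assms by (rule someI[of "\<lambda>\<rho>. realizes p q \<rho> e x y z"])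
  thus ?thesis unfolding Phi_def using assms unfolding realizes_def
    by (simp, intro fricke) auto
qed

definition decode :: "(word \<Rightarrow> complex) \<Rightarrow> complex \<times> complex \<times> complex \<times> complex" where
  "decode ch = (ch [(H,True)] / 2, ch [(C1,True)], ch [(C2,True)], ch [(C1,True),(C2,True)])"

lemma decode_char: "realizes p q \<rho> e x y z \<Longrightarrow> decode (character \<rho>) = (e,x,y,z)"
  unfolding decode_def char_simps realizes_def by (simp add: tr_mat)

definition Dset :: "(nat \<Rightarrow> int) \<Rightarrow> (nat \<Rightarrow> int) \<Rightarrow> (complex \<times> complex \<times> complex \<times> complex) set" where
  "Dset p q = {(e,x,y,z). (e = 1 \<or> e = -1) \<and> x \<in> Sset (nat (p 1)) (sgq e (q 1)) \<and>
     y \<in> Sset (nat (p 2)) (sgq e (q 2)) \<and> z \<in> Sset (nat (p 3)) (sgq e (q 3))}"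

definition rep4 :: "mat2 \<Rightarrow> mat2 \<Rightarrow> mat2 \<Rightarrow> mat2 \<Rightarrow> gen \<Rightarrow> mat2" where
  "rep4 A B C Hm = (\<lambda>g. case g of C1 \<Rightarrow> A | C2 \<Rightarrow> B | C3 \<Rightarrow> C | H \<Rightarrow> Hm)"

lemma rep4_simps[simp]: "rep4 A B C Hm C1 = A" "rep4 A B C Hm C2 = B" "rep4 A B C Hm C3 = C" "rep4 A B C Hm H = Hm"
  by (simp_all add: rep4_def)

lemma D_realize: assumes p: "\<forall>i\<in>{1,2,3::nat}. p i \<ge> 1" and d: "(e,x,y,z) \<in> Dset p q"
  shows "\<exists>\<rho>. realizes p q \<rho> e x y z"
proof -
  have e: "e = 1 \<or> e = -1" and t: "x \<in> Sset (nat (p 1)) (sgq e (q 1))" "y \<in> Sset (nat (p 2)) (sgq e (q 2))"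
      "z \<in> Sset (nat (p 3)) (sgq e (q 3))" using d unfolding Dset_def by auto
  obtain l where l: "l^nat (p 3) = sgq e (q 3)" "z = l + 1/l" using t(3) S_mem by blast
  have p3: "p 3 \<ge> 1" using p by simp
  have n3: "1 \<le> nat (p 3)" using p3 by simp
  have l0: "l \<noteq> 0" using S_l0[OF n3 sq1_nz[OF sgq_sq[OF e, of "q 3"]] l(1)] .
  define u where "u = - l"
  have u0: "u \<noteq> 0" using l0 u_def by simp
  define \<rho> where "\<rho> = rep4 (M2 x 1 (-1) 0) (M2 0 u (-1/u) y) (M2 (-u) (-(x*u+y)) 0 (-1/u)) (mat e)"
  have tC3: "trace (\<rho> C3) = z" unfolding \<rho>_def l(2) u_def using l0 by (simp add: m2)
  have tC12: "trace (\<rho> C1 ** \<rho> C2) = z" unfolding \<rho>_def l(2) u_def using l0 by (simp add: m2)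
  have r: "is_rep p q \<rho>"
  proof (rule is_rep_intro[OF e])
    show "\<rho> H = mat e" unfolding \<rho>_def by simp
    show "det (\<rho> C1) = 1" "det (\<rho> C2) = 1" "det (\<rho> C3) = 1" unfolding \<rho>_def using u0 by (simp_all add: m2)
    show "\<rho> C1 ** \<rho> C2 ** \<rho> C3 = mat 1" unfolding \<rho>_def using u0 by (simp add: m2 field_simps)
    show "\<forall>i\<in>{1,2,3::nat}. p i \<ge> 1" by (rule p)
    show "trace (\<rho> C1) \<in> Sset (nat (p 1)) (sgq e (q 1))" using t(1) unfolding \<rho>_def by (simp add: m2)
    show "trace (\<rho> C2) \<in> Sset (nat (p 2)) (sgq e (q 2))" using t(2) unfolding \<rho>_def by (simp add: m2)
    show "trace (\<rho> C3) \<in> Sset (nat (p 3)) (sgq e (q 3))" using t(3) tC3 by simp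
  qed
  have "realizes p q \<rho> e x y z" unfolding realizes_def using r tC12 by (simp add: \<rho>_def m2)
  thus ?thesis by blast
qed

lemma Xms: "(X::mat2) ** mat s = mat 1 \<Longrightarrow> s * s = 1 \<Longrightarrow> X = mat s"
proof -
  assume a: "X ** mat s = mat 1" and s: "s * s = 1"
  have "X = X ** (mat s ** mat s)" using s by (simp add: mat_mult_scal)
  also have "\<dots> = (X ** mat s) ** mat s" by (simp add: matrix_mul_assoc)
  finally show ?thesis using a by simp
qed

lemma traces_in_S:
  assumes r: "is_rep p q \<rho>" and h: "\<rho> H = mat e" and e: "e = 1 \<or> e = -1" and pi: "p i \<ge> 1"
    and i: "i \<in> {1,2,3}" and n1: "\<rho> (cgen i) \<noteq> mat 1" and n2: "\<rho> (cgen i) \<noteq> mat (-1)"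
  shows "trace (\<rho> (cgen i)) \<in> Sset (nat (p i)) (sgq e (q i))"
proof -
  have "mpow_int (\<rho> (cgen i)) (p i) ** mat (sgq e (q i)) = mat 1"
    using is_repD(4)[OF r i] h mpow_int_mat[OF e_sq[OF e]] unfolding sgq_def by simp
  hence "mpow_nat (\<rho> (cgen i)) (nat (p i)) ** mat (sgq e (q i)) = mat 1" using pi by (simp add: mpow_int_def)
  hence pw: "mpow_nat (\<rho> (cgen i)) (nat (p i)) = mat (sgq e (q i))" using Xms sgq_sq[OF e] by blast
  have n: "nat (p i) \<ge> 1" using pi by simp
  obtain l where "l ^ nat (p i) = sgq e (q i)" "l * l \<noteq> 1" "trace (\<rho> (cgen i)) = l + 1/l"
    using SPEC[OF is_repD(1)[OF r] n pw n1 n2] by blast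
  thus ?thesis unfolding S_mem by blast
qed

lemma tr_scal: "trace (mat s ** B) = s * trace (B::mat2)" "trace (B ** mat s) = s * trace (B::mat2)"
  by (simp_all add: m2 algebra_simps)

lemma adj_trace: "trace (adj A) = trace (A::mat2)" by (simp add: m2 adj_def)

lemma kap_scalar: assumes r: "is_rep p q \<rho>" and s: "s * s = 1"
  and sc: "\<rho> C1 = mat s \<or> \<rho> C2 = mat s \<or> \<rho> C3 = mat s"
  shows "kap (trace (\<rho> C1)) (trace (\<rho> C2)) (trace (\<rho> C1 ** \<rho> C2)) = 0"
proof -
  { assume a: "\<rho> C1 = mat s"
    have ?thesis unfolding a tr_scal tr_mat kap_def using s by algebra }
  moreover
  { assume a: "\<rho> C2 = mat s"
    have ?thesis unfolding a tr_scal tr_mat kap_def using s by algebra }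
  moreover
  { assume a: "\<rho> C3 = mat s"
    have "\<rho> C1 ** \<rho> C2 ** mat s = mat 1" using is_repD(2)[OF r] a by simp
    hence ab: "\<rho> C1 ** \<rho> C2 = mat s" using Xms s by blast
    have "\<rho> C2 = adj (\<rho> C1) ** (\<rho> C1 ** \<rho> C2)"
      by (metis adj_inv(2) is_repD(1)[OF r] matrix_mul_assoc matrix_mul_lid)
    hence "trace (\<rho> C2) = s * trace (\<rho> C1)" unfolding ab by (simp add: tr_scal adj_trace)
    hence ?thesis unfolding ab tr_mat kap_def using s by algebra }
  ultimately show ?thesis using sc by blast
qed

lemma nonscalar_of_kap: assumes r: "is_rep p q \<rho>" and k: "kap (trace (\<rho> C1)) (trace (\<rho> C2)) (trace (\<rho> C1 ** \<rho> C2)) \<noteq> 0"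
  shows "\<forall>i\<in>{1,2,3::nat}. \<rho> (cgen i) \<noteq> mat 1 \<and> \<rho> (cgen i) \<noteq> mat (-1)"
proof -
  have "\<rho> g \<noteq> mat s" if "s * s = 1" "g \<in> {C1, C2, C3}" for s g
    using kap_scalar[OF r that(1)] k that(2) by auto
  thus ?thesis by auto
qed

lemma D_of_rep: assumes r: "is_rep p q \<rho>" and h: "\<rho> H = mat e" and e: "e = 1 \<or> e = -1"
  and p: "\<forall>i\<in>{1,2,3::nat}. p i \<ge> 1"
  and ns: "\<forall>i\<in>{1,2,3::nat}. \<rho> (cgen i) \<noteq> mat 1 \<and> \<rho> (cgen i) \<noteq> mat (-1)"
  shows "(e, trace (\<rho> C1), trace (\<rho> C2), trace (\<rho> C1 ** \<rho> C2)) \<in> Dset p q"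
    "realizes p q \<rho> e (trace (\<rho> C1)) (trace (\<rho> C2)) (trace (\<rho> C1 ** \<rho> C2))"
proof -
  have t: "trace (\<rho> (cgen i)) \<in> Sset (nat (p i)) (sgq e (q i))" if "i \<in> {1,2,3}" for i
    using traces_in_S[OF r h e _ that] p ns that by auto
  show "(e, trace (\<rho> C1), trace (\<rho> C2), trace (\<rho> C1 ** \<rho> C2)) \<in> Dset p q"
    unfolding Dset_def using e t[of 1] t[of 2] t[of 3] tr_C3[OF r] by auto
  show "realizes p q \<rho> e (trace (\<rho> C1)) (trace (\<rho> C2)) (trace (\<rho> C1 ** \<rho> C2))"
    unfolding realizes_def using r h by simp
qed

lemma Xirr_eq: assumes p: "\<forall>i\<in>{1,2,3::nat}. p i \<ge> 1"
  shows "Xirr p q = Phi p q ` {d \<in> Dset p q. case d of (e,x,y,z) \<Rightarrow> kap x y z \<noteq> 0}"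
proof (intro set_eqI iffI)
  fix ch assume "ch \<in> Xirr p q"
  then obtain \<rho> where r: "is_rep p q \<rho>" and irr: "irreducible_rep \<rho>" and ch: "ch = character \<rho>"
    unfolding Xirr_def by blast
  obtain e where h: "\<rho> H = mat e" and e: "e = 1 \<or> e = -1" using irr_H[OF r irr] by blast
  have k: "kap (trace (\<rho> C1)) (trace (\<rho> C2)) (trace (\<rho> C1 ** \<rho> C2)) \<noteq> 0" by (rule irr_kap[OF r irr h])
  note D = D_of_rep[OF r h e p nonscalar_of_kap[OF r k]]
  show "ch \<in> Phi p q ` {d \<in> Dset p q. case d of (e,x,y,z) \<Rightarrow> kap x y z \<noteq> 0}"
    using D k Phi_eq[OF D(2)] ch by force
next
  fix ch assume "ch \<in> Phi p q ` {d \<in> Dset p q. case d of (e,x,y,z) \<Rightarrow> kap x y z \<noteq> 0}"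
  then obtain e x y z where d: "(e,x,y,z) \<in> Dset p q" and k: "kap x y z \<noteq> 0" and ch: "ch = Phi p q (e,x,y,z)"
    by auto
  obtain \<rho> where re: "realizes p q \<rho> e x y z" using D_realize[OF p d] by blast
  have r: "is_rep p q \<rho>" using re unfolding realizes_def by simp
  have "irreducible_rep \<rho>"
  proof (rule ccontr)
    assume "\<not> irreducible_rep \<rho>"
    then obtain v where v: "v \<noteq> 0" "\<forall>g. \<exists>c. \<rho> g *v v = c *s v" unfolding irreducible_rep_def by blast
    obtain a b where "\<rho> C1 *v v = a *s v" "\<rho> C2 *v v = b *s v" using v(2) by blast
    hence "kap (trace (\<rho> C1)) (trace (\<rho> C2)) (trace (\<rho> C1 ** \<rho> C2)) = 0"
      using CE_conv[OF is_repD(1)[OF r] is_repD(1)[OF r] v(1)] by blast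
    thus False using k re unfolding realizes_def by simp
  qed
  thus "ch \<in> Xirr p q" unfolding Xirr_def using r ch Phi_eq[OF re] by auto
qed

lemma diag_eig: "diagonal_mat A \<Longrightarrow> A *v (\<chi> i. if i = 1 then 1 else 0) = (A$1$1) *s (\<chi> i. if i = 1 then (1::complex) else 0)"
  by (simp add: m2 diagonal_mat_def)

lemma kap_factor: assumes "(l1::complex) \<noteq> 0" "l2 \<noteq> 0"
  shows "kap (l1 + 1/l1) (l2 + 1/l2) z = (z - (l1*l2 + 1/(l1*l2))) * (z - (l1*(1/l2) + 1/(l1*(1/l2))))"
  unfolding kap_def using assms by (simp add: field_simps) (simp add: algebra_simps power2_eq_square power3_eq_cube)

lemma Exc_eq: assumes p: "\<forall>i\<in>{1,2,3::nat}. p i \<ge> 1"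
  shows "exceptional_abelian_chars p q = Phi p q ` {d \<in> Dset p q. case d of (e,x,y,z) \<Rightarrow> kap x y z = 0}"
proof (intro set_eqI iffI)
  fix ch assume "ch \<in> exceptional_abelian_chars p q"
  then obtain \<rho>1 \<rho> where r1: "is_rep p q \<rho>1" and dg: "\<forall>g. diagonal_mat (\<rho>1 g)" and ch1: "ch = character \<rho>1"
    and r: "is_rep p q \<rho>" and ch: "character \<rho> = ch" and hh: "\<rho> H = mat 1 \<or> \<rho> H = - mat 1"
    and ns: "\<forall>i\<in>{1,2,3::nat}. \<rho> (cgen i) \<noteq> mat 1 \<and> \<rho> (cgen i) \<noteq> - mat 1"
    unfolding exceptional_abelian_chars_def abelian_chars_def by blast
  obtain e where h: "\<rho> H = mat e" and e: "e = 1 \<or> e = -1" using hh minus_mat1 by metis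
  have v0: "(\<chi> i. if i = 1 then (1::complex) else 0) \<noteq> (0::complex^2)" by (simp add: vec_eq_iff)
  have k1: "kap (trace (\<rho>1 C1)) (trace (\<rho>1 C2)) (trace (\<rho>1 C1 ** \<rho>1 C2)) = 0"
    using CE_conv[OF is_repD(1)[OF r1] is_repD(1)[OF r1] v0 diag_eig[OF dg[rule_format, of C1]]
        diag_eig[OF dg[rule_format, of C2]]] .
  have tr: "trace (\<rho> C1) = trace (\<rho>1 C1)" "trace (\<rho> C2) = trace (\<rho>1 C2)"
      "trace (\<rho> C1 ** \<rho> C2) = trace (\<rho>1 C1 ** \<rho>1 C2)"
    using ch ch1 char_simps by metis+
  have k: "kap (trace (\<rho> C1)) (trace (\<rho> C2)) (trace (\<rho> C1 ** \<rho> C2)) = 0" using k1 tr by simp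
  have ns': "\<forall>i\<in>{1,2,3::nat}. \<rho> (cgen i) \<noteq> mat 1 \<and> \<rho> (cgen i) \<noteq> mat (-1)" using ns minus_mat1 by simp
  note D = D_of_rep[OF r h e p ns']
  show "ch \<in> Phi p q ` {d \<in> Dset p q. case d of (e,x,y,z) \<Rightarrow> kap x y z = 0}"
    using D k Phi_eq[OF D(2)] ch by force
next
  fix ch assume "ch \<in> Phi p q ` {d \<in> Dset p q. case d of (e,x,y,z) \<Rightarrow> kap x y z = 0}"
  then obtain e x y z where d: "(e,x,y,z) \<in> Dset p q" and k: "kap x y z = 0" and ch: "ch = Phi p q (e,x,y,z)"
    by auto
  have e: "e = 1 \<or> e = -1" and t: "x \<in> Sset (nat (p 1)) (sgq e (q 1))" "y \<in> Sset (nat (p 2)) (sgq e (q 2))"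
      "z \<in> Sset (nat (p 3)) (sgq e (q 3))" using d unfolding Dset_def by auto
  have n: "nat (p i) \<ge> 1" if "i \<in> {1,2,3}" for i using p that by auto
  have sn: "sgq e k \<noteq> 0" for k using sq1_nz[OF sgq_sq[OF e]] .
  obtain l1 where l1: "l1^nat (p 1) = sgq e (q 1)" "x = l1 + 1/l1" using t(1) S_mem by blast
  obtain l2 where l2: "l2^nat (p 2) = sgq e (q 2)" "y = l2 + 1/l2" using t(2) S_mem by blast
  have l10: "l1 \<noteq> 0" using S_l0[OF n[of 1] sn l1(1)] by simp
  have l20: "l2 \<noteq> 0" using S_l0[OF n[of 2] sn l2(1)] by simp
  have "(z - (l1*l2 + 1/(l1*l2))) * (z - (l1*(1/l2) + 1/(l1*(1/l2)))) = 0"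
    using k kap_factor[OF l10 l20, of z] l1(2) l2(2) by simp
  then obtain b where b: "b \<noteq> 0" "y = b + 1/b" "z = l1*b + 1/(l1*b)"
  proof (cases "z = l1*l2 + 1/(l1*l2)")
    case True
    then show ?thesis using that l20 l2(2) by blast
  next
    case False
    hence "z = l1*(1/l2) + 1/(l1*(1/l2))" using \<open>_ * _ = 0\<close> by simp
    moreover have "y = 1/l2 + 1/(1/l2)" using l2(2) by simp
    ultimately show ?thesis using that l20 by (metis divide_eq_0_iff one_neq_zero)
  qed
  define \<rho> where "\<rho> = rep4 (M2 l1 0 0 (1/l1)) (M2 b 0 0 (1/b)) (M2 (1/(l1*b)) 0 0 (l1*b)) (mat e)"
  have tr: "trace (\<rho> C1) = x" "trace (\<rho> C2) = y" "trace (\<rho> C3) = z" "trace (\<rho> C1 ** \<rho> C2) = z"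
    unfolding \<rho>_def l1(2) b(2,3) using l10 b(1) by (simp_all add: m2 field_simps)
  have r: "is_rep p q \<rho>"
  proof (rule is_rep_intro[OF e])
    show "\<rho> H = mat e" unfolding \<rho>_def by simp
    show "det (\<rho> C1) = 1" "det (\<rho> C2) = 1" "det (\<rho> C3) = 1" unfolding \<rho>_def using l10 b(1) by (simp_all add: m2)
    show "\<rho> C1 ** \<rho> C2 ** \<rho> C3 = mat 1" unfolding \<rho>_def using l10 b(1) by (simp add: m2 field_simps)
    show "\<forall>i\<in>{1,2,3::nat}. p i \<ge> 1" by (rule p)
  qed (use t tr in simp_all)
  have re: "realizes p q \<rho> e x y z" unfolding realizes_def using r tr by (simp add: \<rho>_def)
  have dg: "\<forall>g. diagonal_mat (\<rho> g)"
  proof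
    fix g show "diagonal_mat (\<rho> g)" unfolding \<rho>_def diagonal_mat_def by (cases g) (simp_all add: m2)
  qed
  have ab: "character \<rho> \<in> abelian_chars p q" unfolding abelian_chars_def using r dg by blast
  have ti: "trace (\<rho> (cgen i)) \<in> Sset (nat (p i)) (sgq e (q i))" if "i \<in> {1,2,3}" for i
    using that t tr by auto
  have nsc: "\<rho> (cgen i) \<noteq> mat 1 \<and> \<rho> (cgen i) \<noteq> - mat 1" if "i \<in> {1,2,3}" for i
  proof -
    have "trace (\<rho> (cgen i)) \<noteq> 2" "trace (\<rho> (cgen i)) \<noteq> -2"
      using S_not2[OF ti[OF that] n[OF that] sn] by auto
    moreover have "trace (mat 1 :: mat2) = 2" "trace (- mat 1 :: mat2) = -2" by (simp_all add: m2)
    ultimately show ?thesis by auto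
  qed
  have hh: "\<rho> H = mat 1 \<or> \<rho> H = - mat 1" using e unfolding \<rho>_def by (auto simp: minus_mat1)
  have "character \<rho> \<in> exceptional_abelian_chars p q"
    unfolding exceptional_abelian_chars_def using ab r hh nsc by blast
  thus "ch \<in> exceptional_abelian_chars p q" using ch Phi_eq[OF re] by simp
qed

lemma D_split: "Dset p q =
  ({1} \<times> (Sset (nat (p 1)) (sgq 1 (q 1)) \<times> Sset (nat (p 2)) (sgq 1 (q 2)) \<times> Sset (nat (p 3)) (sgq 1 (q 3)))) \<union>
  ({-1} \<times> (Sset (nat (p 1)) (sgq (-1) (q 1)) \<times> Sset (nat (p 2)) (sgq (-1) (q 2)) \<times> Sset (nat (p 3)) (sgq (-1) (q 3))))"
  by (auto simp: Dset_def)

lemma count_p: assumes "p \<ge> 1" shows "int (card (Sset (nat p) (sgq 1 k))) = \<lceil>real_of_int p / 2\<rceil> - 1"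
  using count_plus[OF assms] by (simp add: sgq_def)

lemma count_m: assumes "p \<ge> 1" "coprime p k" shows "int (card (Sset (nat p) (sgq (-1) k))) = \<lfloor>real_of_int p / 2\<rfloor>"
proof (cases "even k")
  case True
  have "odd p"
  proof
    assume "even p"
    hence "is_unit (2::int)" using coprime_common_divisor[OF assms(2)] True by blast
    thus False by simp
  qed
  thus ?thesis using count_minus_odd[OF assms(1)] True by (simp add: sgq_def)
next
  case False
  thus ?thesis using count_minus[OF assms(1)] by (simp add: sgq_def)
qed

lemma finS: assumes "p \<ge> 1" "e = 1 \<or> e = -1" shows "finite (Sset (nat p) (sgq e k))"
  using card_R_S(1)[of "nat p" "sgq e k"] assms sgq_sq[OF assms(2)] by simp

theorem proposition5p8:
  fixes p q :: "nat \<Rightarrow> int"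
  assumes "\<forall>i\<in>{1,2,3::nat}. p i \<ge> 1 \<and> coprime (p i) (q i)"
    and "(\<Sum>i\<in>{1,2,3::nat}. real_of_int (q i) / real_of_int (p i)) \<noteq> 0"
  shows "finite (Xirr p q) \<and> finite (exceptional_abelian_chars p q) \<and>
    int (card (Xirr p q)) =
      (\<Prod>i\<in>{1,2,3::nat}. \<lceil>real_of_int (p i) / 2\<rceil> - 1)
      + (\<Prod>i\<in>{1,2,3::nat}. \<lfloor>real_of_int (p i) / 2\<rfloor>)
      - int (card (exceptional_abelian_chars p q))"
proof -
  have p: "\<forall>i\<in>{1,2,3::nat}. p i \<ge> 1" using assms(1) by auto
  have p1: "p 1 \<ge> 1" "p 2 \<ge> 1" "p 3 \<ge> 1" using p by auto
  have cp: "coprime (p 1) (q 1)" "coprime (p 2) (q 2)" "coprime (p 3) (q 3)" using assms(1) by auto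
  define D0 where "D0 = {d \<in> Dset p q. case d of (e,x,y,z) \<Rightarrow> kap x y z \<noteq> 0}"
  define D1 where "D1 = {d \<in> Dset p q. case d of (e,x,y,z) \<Rightarrow> kap x y z = 0}"
  have inj: "inj_on (Phi p q) (Dset p q)"
  proof (rule inj_onI)
    fix d1 d2 assume d: "d1 \<in> Dset p q" "d2 \<in> Dset p q" "Phi p q d1 = Phi p q d2"
    obtain e1 x1 y1 z1 where d1: "d1 = (e1,x1,y1,z1)" by (cases d1) auto
    obtain e2 x2 y2 z2 where d2: "d2 = (e2,x2,y2,z2)" by (cases d2) auto
    obtain \<rho>1 where r1: "realizes p q \<rho>1 e1 x1 y1 z1" using D_realize[OF p] d(1) d1 by blast
    obtain \<rho>2 where r2: "realizes p q \<rho>2 e2 x2 y2 z2" using D_realize[OF p] d(2) d2 by blast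
    have "d1 = decode (Phi p q d1)" using decode_char[OF r1] Phi_eq[OF r1] d1 by simp
    also have "\<dots> = decode (Phi p q d2)" using d(3) by simp
    also have "\<dots> = d2" using decode_char[OF r2] Phi_eq[OF r2] d2 by simp
    finally show "d1 = d2" .
  qed
  have fD: "finite (Dset p q)" unfolding D_split using finS p1 by auto
  have cD: "int (card (Dset p q)) = (\<Prod>i\<in>{1,2,3::nat}. \<lceil>real_of_int (p i) / 2\<rceil> - 1)
      + (\<Prod>i\<in>{1,2,3::nat}. \<lfloor>real_of_int (p i) / 2\<rfloor>)"
  proof -
    have "card (Dset p q) =
      card (Sset (nat (p 1)) (sgq 1 (q 1))) * card (Sset (nat (p 2)) (sgq 1 (q 2))) * card (Sset (nat (p 3)) (sgq 1 (q 3))) +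
      card (Sset (nat (p 1)) (sgq (-1) (q 1))) * card (Sset (nat (p 2)) (sgq (-1) (q 2))) * card (Sset (nat (p 3)) (sgq (-1) (q 3)))"
      unfolding D_split using finS p1 by (subst card_Un_disjoint) (auto simp: card_cartesian_product)
    hence "int (card (Dset p q)) =
      int (card (Sset (nat (p 1)) (sgq 1 (q 1)))) * int (card (Sset (nat (p 2)) (sgq 1 (q 2)))) * int (card (Sset (nat (p 3)) (sgq 1 (q 3)))) +
      int (card (Sset (nat (p 1)) (sgq (-1) (q 1)))) * int (card (Sset (nat (p 2)) (sgq (-1) (q 2)))) * int (card (Sset (nat (p 3)) (sgq (-1) (q 3))))"
      by simp
    thus ?thesis using count_p[OF p1(1)] count_p[OF p1(2)] count_p[OF p1(3)]
        count_m[OF p1(1) cp(1)] count_m[OF p1(2) cp(2)] count_m[OF p1(3) cp(3)]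
      by (simp add: mult.assoc)
  qed
  have X: "Xirr p q = Phi p q ` D0" unfolding D0_def by (rule Xirr_eq[OF p])
  have E: "exceptional_abelian_chars p q = Phi p q ` D1" unfolding D1_def by (rule Exc_eq[OF p])
  have sub: "D0 \<subseteq> Dset p q" "D1 \<subseteq> Dset p q" unfolding D0_def D1_def by auto
  have cX: "card (Xirr p q) = card D0" unfolding X by (rule card_image[OF inj_on_subset[OF inj sub(1)]])
  have cE: "card (exceptional_abelian_chars p q) = card D1" unfolding E by (rule card_image[OF inj_on_subset[OF inj sub(2)]])
  have un: "Dset p q = D0 \<union> D1" "D0 \<inter> D1 = {}" unfolding D0_def D1_def by auto
  have "card (Dset p q) = card D0 + card D1"
    unfolding un(1) by (rule card_Un_disjoint) (use fD sub un(2) in \<open>auto intro: finite_subset\<close>)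
  moreover have "finite (Xirr p q)" "finite (exceptional_abelian_chars p q)"
    unfolding X E using fD sub by (auto intro: finite_subset)
  ultimately show ?thesis using cD cX cE by simp
qed

end
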